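(* Let $G=(V,E,w)$ be a weighted graph with no isolated vertices, let $s\in[0,1]^V$, let $k\in\mathbb{N}$, and let $\alpha,\beta\ge 0$ be constants, not both zero. Consider the objective $F(s') := \alpha\, D(z') + \beta\, P(z')$ where $z'=(I+L)^{-1}s'$. Let $s'$ be a maximizer of $F$ over the feasible set $\{s'\in[0,1]^V : \|s'-s\|_0\le k\}$. Then for every $v\in V$, if $s'_v\neq s_v$ then $s'_v\in\{0,1\}$. (In particular this applies to maximizing disagreement alone, polarization alone, or $P+\lambda\frac{n}{m}D$ for $\lambda\ge 0$.)
   Context: $G=(V,E,w)$ is a weighted undirected graph on $n=|V|$ vertices with $m=|E|$ edges, with weights $w_{u,v}\in(0,1]$ for $(u,v)\in E$ and $w_{u,v}=0$ otherwise (and $w_{v,v}=0$). $L=\mathrm{Diag}(d)-A$ is the weighted Laplacian, where $A_{u,v}=w_{u,v}$ and $d_v=\sum_u w_{v,u}$. Given innate opinions $s\in[0,1]^V$, the (Friedkin–Johnsen) equilibrium opinions are $z=(I+L)^{-1}s$. Disagreement is $D(z)=\sum_{(u,v)\in E} w_{u,v}(z_u-z_v)^2$ and polarization is $P(z)=\sum_{v\in V}(z_v-\bar z)^2$ with $\bar z=\frac1n\sum_v z_v$. $\|x\|_0$ denotes the number of nonzero coordinates of $x$. *)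

theory Defs
  imports "HOL-Analysis.Analysis"
begin

text \<open>Weighted undirected graph on the finite vertex type 'n, given by its weight
function w (w u v = 0 iff (u,v) is not an edge).\<close>

definition weighted_graph :: "('n::finite \<Rightarrow> 'n \<Rightarrow> real) \<Rightarrow> bool" where
  "weighted_graph w \<longleftrightarrow>
     (\<forall>u v. w u v = w v u) \<and> (\<forall>u v. 0 \<le> w u v \<and> w u v \<le> 1) \<and> (\<forall>v. w v v = 0)"

definition no_isolated_vertices :: "('n::finite \<Rightarrow> 'n \<Rightarrow> real) \<Rightarrow> bool" where
  "no_isolated_vertices w \<longleftrightarrow> (\<forall>v. \<exists>u. w v u \<noteq> 0)"

definition degree :: "('n::finite \<Rightarrow> 'n \<Rightarrow> real) \<Rightarrow> 'n \<Rightarrow> real" where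
  "degree w v = (\<Sum>u\<in>UNIV. w v u)"

definition adjacency :: "('n::finite \<Rightarrow> 'n \<Rightarrow> real) \<Rightarrow> real^'n^'n" where
  "adjacency w = (\<chi> u v. w u v)"

definition laplacian :: "('n::finite \<Rightarrow> 'n \<Rightarrow> real) \<Rightarrow> real^'n^'n" where
  "laplacian w = (\<chi> u v. if u = v then degree w u else 0) - adjacency w"

definition fj_equilibrium :: "('n::finite \<Rightarrow> 'n \<Rightarrow> real) \<Rightarrow> real^'n \<Rightarrow> real^'n" where
  "fj_equilibrium w s = matrix_inv (mat 1 + laplacian w) *v s"

text \<open>Disagreement: sum over undirected edges; each unordered pair appears twice
in the ordered double sum, hence the factor 1/2.\<close>
definition disagreement :: "('n::finite \<Rightarrow> 'n \<Rightarrow> real) \<Rightarrow> real^'n \<Rightarrow> real" where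
  "disagreement w z = (1/2) * (\<Sum>u\<in>UNIV. \<Sum>v\<in>UNIV. w u v * (z$u - z$v)^2)"

definition polarization :: "real^'n::finite \<Rightarrow> real" where
  "polarization z = (\<Sum>v\<in>UNIV. (z$v - (\<Sum>u\<in>UNIV. z$u) / real CARD('n))^2)"

definition l0_norm :: "real^'n::finite \<Rightarrow> nat" where
  "l0_norm x = card {v. x$v \<noteq> 0}"

definition unit_cube :: "(real^'n::finite) set" where
  "unit_cube = {x. \<forall>v. 0 \<le> x$v \<and> x$v \<le> 1}"

end

theory Submission imports Defs begin

lemma lap_apply:
  "(laplacian w *v x) $ u = (\<Sum>v\<in>UNIV. w u v * (x$u - x$v))"
proof -
  have "(laplacian w *v x) $ u = (\<Sum>v\<in>UNIV. ((if u = v then degree w u else 0) - w u v) * x$v)"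
    by (simp add: laplacian_def adjacency_def matrix_vector_mult_def)
  also have "\<dots> = (\<Sum>v\<in>UNIV. (if u = v then degree w u * x$v else 0)) - (\<Sum>v\<in>UNIV. w u v * x$v)"
    by (simp add: left_diff_distrib sum_subtractf if_distrib[of "\<lambda>t. t * _"] cong: if_cong)
  also have "\<dots> = degree w u * x$u - (\<Sum>v\<in>UNIV. w u v * x$v)"
    by simp
  also have "\<dots> = (\<Sum>v\<in>UNIV. w u v * (x$u - x$v))"
    by (simp add: degree_def sum_distrib_right right_diff_distrib sum_subtractf)
  finally show ?thesis .
qed

lemma sym_sum:
  fixes w :: "'n::finite \<Rightarrow> 'n \<Rightarrow> real"
  assumes "\<forall>u v. w u v = w v u"
  shows "2 * (\<Sum>u\<in>(UNIV::'n::finite set). \<Sum>v\<in>UNIV. w u v * (x$u * (x$u - x$v))) =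
         (\<Sum>u\<in>UNIV. \<Sum>v\<in>UNIV. w u v * (x$u - x$v)^2)"
proof -
  have sw: "\<And>a b. w a b = w b a" using assms by blast
  let ?S = "(\<Sum>u\<in>(UNIV::'n set). \<Sum>v\<in>UNIV. w u v * (x$u * (x$u - x$v)))"
  let ?T = "(\<Sum>u\<in>(UNIV::'n set). \<Sum>v\<in>UNIV. w u v * (x$v * (x$v - x$u)))"
  have "?S = (\<Sum>v\<in>UNIV. \<Sum>u\<in>UNIV. w u v * (x$u * (x$u - x$v)))" by (rule sum.swap)
  also have "\<dots> = ?T"
  proof (rule sum.cong[OF refl], rule sum.cong[OF refl])
    fix a b show "w b a * (x$b * (x$b - x$a)) = w a b * (x$b * (x$b - x$a))" using sw[of a b] by simp
  qed
  finally have ST: "?S = ?T" .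
  have "?S + ?T = (\<Sum>u\<in>UNIV. \<Sum>v\<in>UNIV. w u v * (x$u * (x$u - x$v)) + w u v * (x$v * (x$v - x$u)))"
    by (simp only: sum.distrib)
  also have "\<dots> = (\<Sum>u\<in>UNIV. \<Sum>v\<in>UNIV. w u v * (x$u - x$v)^2)"
  proof (rule sum.cong[OF refl], rule sum.cong[OF refl])
    fix a b show "w a b * (x$a * (x$a - x$b)) + w a b * (x$b * (x$b - x$a)) = w a b * (x$a - x$b)^2"
      by (simp add: power2_eq_square algebra_simps)
  qed
  finally show ?thesis using ST by simp
qed

lemma inv_ok:
  assumes "weighted_graph w"
  shows "invertible (mat 1 + laplacian w)"
proof -
  have "\<forall>x. (mat 1 + laplacian w) *v x = 0 \<longrightarrow> x = 0"
  proof (intro allI impI)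
    fix x :: "real^'a" assume h: "(mat 1 + laplacian w) *v x = 0"
    have comp: "\<And>u. x$u + (\<Sum>v\<in>UNIV. w u v * (x$u - x$v)) = 0"
    proof -
      fix u
      have "((mat 1 + laplacian w) *v x)$u = 0" using h by simp
      thus "x$u + (\<Sum>v\<in>UNIV. w u v * (x$u - x$v)) = 0"
        by (simp add: matrix_vector_mult_add_rdistrib lap_apply)
    qed
    have "(\<Sum>u\<in>UNIV. x$u * (x$u + (\<Sum>v\<in>UNIV. w u v * (x$u - x$v)))) = 0"
      using comp by simp
    moreover have "\<And>u. x$u * (x$u + (\<Sum>v\<in>UNIV. w u v * (x$u - x$v))) = (x$u)^2 + (\<Sum>v\<in>UNIV. w u v * (x$u * (x$u - x$v)))"
      by (simp add: distrib_left sum_distrib_left power2_eq_square mult.left_commute)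
    ultimately have "(\<Sum>u\<in>UNIV. (x$u)^2) + (\<Sum>u\<in>UNIV. \<Sum>v\<in>UNIV. w u v * (x$u * (x$u - x$v))) = 0"
      by (simp add: sum.distrib)
    moreover have "(\<Sum>u\<in>UNIV. \<Sum>v\<in>UNIV. w u v * (x$u * (x$u - x$v))) \<ge> 0"
    proof -
      have "(\<Sum>u\<in>UNIV. \<Sum>v\<in>(UNIV::'a set). w u v * (x$u - x$v)^2) \<ge> 0"
        using assms unfolding weighted_graph_def by (intro sum_nonneg) auto
      moreover have "\<forall>u v. w u v = w v u" using assms unfolding weighted_graph_def by blast
      ultimately show ?thesis using sym_sum[of w x] by auto
    qed
    moreover have "(\<Sum>u\<in>UNIV. (x$u)^2) \<ge> 0" by (intro sum_nonneg) auto
    ultimately have "(\<Sum>u\<in>UNIV. (x$u)^2) = 0" by linarith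
    hence "\<forall>u\<in>UNIV. (x$u)^2 = 0" by (subst (asm) sum_nonneg_eq_0_iff) auto
    thus "x = 0" by (simp add: vec_eq_iff)
  qed
  hence "\<exists>B::real^'a^'a. B ** (mat 1 + laplacian w) = mat 1"
    by (simp only: matrix_left_invertible_ker)
  thus ?thesis by (simp only: invertible_left_inverse)
qed

lemma inv_apply:
  assumes "invertible (N::real^'n::finite^'n)"
  shows "N *v (matrix_inv N *v e) = e"
proof -
  have "N ** matrix_inv N = mat 1 \<and> matrix_inv N ** N = mat 1"
    using assms unfolding invertible_def matrix_inv_def by (rule someI_ex)
  thus ?thesis by (simp add: matrix_vector_mul_assoc)
qed

definition dcross :: "('n::finite \<Rightarrow> 'n \<Rightarrow> real) \<Rightarrow> real^'n \<Rightarrow> real^'n \<Rightarrow> real" where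
  "dcross w p q = (\<Sum>u\<in>UNIV. \<Sum>v\<in>UNIV. w u v * ((p$u - p$v) * (q$u - q$v)))"

lemma sum3:
  fixes f g h :: "'a \<Rightarrow> 'b \<Rightarrow> real"
  shows "(\<Sum>u\<in>A. \<Sum>v\<in>B. f u v + c1 * g u v + c2 * h u v) =
   (\<Sum>u\<in>A. \<Sum>v\<in>B. f u v) + c1 * (\<Sum>u\<in>A. \<Sum>v\<in>B. g u v) + c2 * (\<Sum>u\<in>A. \<Sum>v\<in>B. h u v)"
  unfolding sum.distrib sum_distrib_left ..

lemma sum3':
  fixes f g h :: "'a \<Rightarrow> real"
  shows "(\<Sum>u\<in>A. f u + c1 * g u + c2 * h u) =
   (\<Sum>u\<in>A. f u) + c1 * (\<Sum>u\<in>A. g u) + c2 * (\<Sum>u\<in>A. h u)"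
  unfolding sum.distrib sum_distrib_left ..

lemma D_expand:
  "disagreement w (p + y *\<^sub>R q) = disagreement w p + y * dcross w p q + y^2 * disagreement w q"
proof -
  have e: "\<And>u v. w u v * ((p + y *\<^sub>R q)$u - (p + y *\<^sub>R q)$v)^2 =
     w u v * (p$u - p$v)^2 + (2 * y) * (w u v * ((p$u - p$v) * (q$u - q$v))) + y^2 * (w u v * (q$u - q$v)^2)"
    by (simp add: power2_eq_square algebra_simps)
  have g: "\<And>X Y Z::real. (1/2) * (X + (2*y)*Y + y^2*Z) = (1/2)*X + y*Y + y^2*((1/2)*Z)"
    by (simp add: algebra_simps)
  show ?thesis unfolding disagreement_def dcross_def e sum3 g ..
qed

definition pcross :: "real^'n::finite \<Rightarrow> real^'n \<Rightarrow> real" where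
  "pcross p q = (\<Sum>v\<in>UNIV. (p$v - (\<Sum>u\<in>UNIV. p$u) / real CARD('n)) * (q$v - (\<Sum>u\<in>UNIV. q$u) / real CARD('n)))"

lemma P_expand:
  "polarization (p + y *\<^sub>R q) = polarization p + y * (2 * pcross p q) + y^2 * polarization q"
proof -
  define mp where "mp = (\<Sum>u\<in>UNIV. p$u) / real CARD('a)"
  define mq where "mq = (\<Sum>u\<in>UNIV. q$u) / real CARD('a)"
  have "(\<Sum>u\<in>UNIV. (p + y *\<^sub>R q)$u) = (\<Sum>u\<in>UNIV. p$u) + y * (\<Sum>u\<in>UNIV. q$u)"
    by (simp add: sum.distrib sum_distrib_left)
  hence m: "(\<Sum>u\<in>UNIV. (p + y *\<^sub>R q)$u) / real CARD('a) = mp + y * mq"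
    unfolding mp_def mq_def by (simp add: add_divide_distrib)
  have e: "\<And>v. ((p + y *\<^sub>R q)$v - (mp + y * mq))^2 =
     (p$v - mp)^2 + y * (2 * ((p$v - mp) * (q$v - mq))) + y^2 * (q$v - mq)^2"
    by (simp add: power2_eq_square algebra_simps)
  show ?thesis unfolding polarization_def pcross_def m mp_def[symmetric] mq_def[symmetric] e sum3' sum_distrib_left[symmetric] ..
qed


theorem theorem1p1:
  fixes w :: "'n::finite \<Rightarrow> 'n \<Rightarrow> real"
    and s s' :: "real^'n"
    and k :: nat
    and \<alpha> \<beta> :: real
  assumes "weighted_graph w"
    and "no_isolated_vertices w"
    and "s \<in> unit_cube"
    and "\<alpha> \<ge> 0" and "\<beta> \<ge> 0" and "\<not> (\<alpha> = 0 \<and> \<beta> = 0)"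
    and "s' \<in> unit_cube" and "l0_norm (s' - s) \<le> k"
    and "\<forall>t \<in> unit_cube. l0_norm (t - s) \<le> k \<longrightarrow>
           \<alpha> * disagreement w (fj_equilibrium w t) + \<beta> * polarization (fj_equilibrium w t)
         \<le> \<alpha> * disagreement w (fj_equilibrium w s') + \<beta> * polarization (fj_equilibrium w s')"
  shows "\<forall>v. s'$v \<noteq> s$v \<longrightarrow> s'$v = 0 \<or> s'$v = 1"
proof (intro allI impI)
  fix v assume ne: "s'$v \<noteq> s$v"
  show "s'$v = 0 \<or> s'$v = 1"
  proof (rule ccontr)
    assume nb: "\<not> (s'$v = 0 \<or> s'$v = 1)"
    define x0 where "x0 = s'$v"
    have "0 \<le> x0" "x0 \<le> 1" using assms(7) unfolding unit_cube_def x0_def by auto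
    hence x0: "0 < x0" "x0 < 1" using nb unfolding x0_def by auto
    define N where "N = mat 1 + laplacian w"
    have invN: "invertible N" using inv_ok assms(1) N_def by simp
    define e :: "real^'n" where "e = axis v 1"
    define q where "q = matrix_inv N *v e"
    define p where "p = fj_equilibrium w s'"
    define F where "F = (\<lambda>z. \<alpha> * disagreement w z + \<beta> * polarization z)"
    define t where "t = (\<lambda>x::real. s' + (x - x0) *\<^sub>R e)"
    have fjt: "\<And>x. fj_equilibrium w (t x) = p + (x - x0) *\<^sub>R q"
      unfolding t_def p_def q_def fj_equilibrium_def N_def
      by (simp add: matrix_vector_right_distrib matrix_vector_mult_scaleR)
    define c1 where "c1 = \<alpha> * dcross w p q + \<beta> * (2 * pcross p q)"
    define A where "A = \<alpha> * disagreement w q + \<beta> * polarization q"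
    have Fexp: "\<And>y. F (p + y *\<^sub>R q) = F p + y * c1 + y^2 * A"
      unfolding F_def c1_def A_def D_expand P_expand by (simp only: ring_distribs power2_eq_square mult_ac add_ac)
    have tcomp: "\<And>x u. t x $ u = (if u = v then x else s'$u)"
      unfolding t_def e_def x0_def by (simp add: axis_def)
    have feas: "t x \<in> unit_cube \<and> l0_norm (t x - s) \<le> k" if "x = 0 \<or> x = 1" for x
    proof
      show "t x \<in> unit_cube" using assms(7) that unfolding unit_cube_def by (auto simp: tcomp)
      have "{u. (t x - s)$u \<noteq> 0} \<subseteq> {u. (s' - s)$u \<noteq> 0}" using ne by (auto simp: tcomp)
      hence "l0_norm (t x - s) \<le> l0_norm (s' - s)" unfolding l0_norm_def
        by (intro card_mono) auto
      thus "l0_norm (t x - s) \<le> k" using assms(8) by linarith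
    qed
    have le: "F (p + (x - x0) *\<^sub>R q) \<le> F p" if "x = 0 \<or> x = 1" for x
    proof -
      have "\<alpha> * disagreement w (fj_equilibrium w (t x)) + \<beta> * polarization (fj_equilibrium w (t x))
         \<le> \<alpha> * disagreement w (fj_equilibrium w s') + \<beta> * polarization (fj_equilibrium w s')"
        using assms(9) feas[OF that] by blast
      thus ?thesis unfolding F_def p_def[symmetric] fjt .
    qed
    have l0: "(-x0) * c1 + (-x0)^2 * A \<le> 0" using le[of 0] Fexp[of "0 - x0"] by simp
    have l1: "(1-x0) * c1 + (1-x0)^2 * A \<le> 0" using le[of 1] Fexp[of "1 - x0"] by simp
    have m0: "(1-x0) * ((-x0) * c1 + (-x0)^2 * A) \<le> 0"
      using l0 x0 by (intro mult_nonneg_nonpos) auto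
    have m1: "x0 * ((1-x0) * c1 + (1-x0)^2 * A) \<le> 0"
      using l1 x0 by (intro mult_nonneg_nonpos) auto
    have sumeq: "(1-x0) * ((-x0) * c1 + (-x0)^2 * A) + x0 * ((1-x0) * c1 + (1-x0)^2 * A)
        = x0 * (1 - x0) * A"
      by (simp add: power2_eq_square algebra_simps)
    have Apos: "A > 0"
    proof (rule ccontr)
      assume "\<not> A > 0"
      have wg: "\<forall>u v. w u v = w v u" "\<forall>u v. 0 \<le> w u v" "\<forall>v. w v v = 0"
        using assms(1) unfolding weighted_graph_def by auto
      have Dnn: "(\<Sum>a\<in>UNIV. \<Sum>b\<in>UNIV. w a b * (q$a - q$b)^2) \<ge> 0"
        using wg by (intro sum_nonneg) auto
      hence Dq: "disagreement w q \<ge> 0" unfolding disagreement_def by simp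
      have Pq: "polarization q \<ge> 0" unfolding polarization_def by (intro sum_nonneg) auto
      have z: "\<alpha> * disagreement w q = 0 \<and> \<beta> * polarization q = 0"
        using \<open>\<not> A > 0\<close> Dq Pq assms(4,5) unfolding A_def
        by (smt (verit) mult_nonneg_nonneg)
      have edge: "\<forall>a b. w a b \<noteq> 0 \<longrightarrow> q$a = q$b"
      proof (cases "\<alpha> > 0")
        case True
        hence "disagreement w q = 0" using z by simp
        hence S0: "(\<Sum>a\<in>UNIV. \<Sum>b\<in>UNIV. w a b * (q$a - q$b)^2) = 0"
          unfolding disagreement_def by simp
        have "\<forall>a\<in>UNIV. (\<Sum>b\<in>UNIV. w a b * (q$a - q$b)^2) = 0"
          using S0 wg by (subst (asm) sum_nonneg_eq_0_iff) (auto intro!: sum_nonneg)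
        hence "\<forall>a b. w a b * (q$a - q$b)^2 = 0"
          using wg by (subst (asm) sum_nonneg_eq_0_iff) auto
        hence "\<forall>a b. w a b = 0 \<or> q$a = q$b" by simp
        thus ?thesis by blast
      next
        case False
        hence "\<beta> > 0" using assms(4,5,6) by auto
        hence "polarization q = 0" using z by simp
        define m where "m = (\<Sum>u\<in>UNIV. q$u) / real CARD('n)"
        have "(\<Sum>a\<in>UNIV. (q$a - m)^2) = 0" using \<open>polarization q = 0\<close>
          unfolding polarization_def m_def .
        hence "\<forall>a\<in>UNIV. (q$a - m)^2 = 0" by (simp add: sum_nonneg_eq_0_iff)
        hence "\<forall>a. q$a = m" by simp
        thus ?thesis by simp
      qed
      have Nq: "N *v q = e" unfolding q_def using inv_apply[OF invN] .
      have comp: "q$u = e$u" for u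
      proof -
        have "(N *v q)$u = e$u" using Nq by simp
        hence "q$u + (\<Sum>b\<in>UNIV. w u b * (q$u - q$b)) = e$u"
          unfolding N_def by (simp add: matrix_vector_mult_add_rdistrib lap_apply)
        moreover have "(\<Sum>b\<in>UNIV. w u b * (q$u - q$b)) = 0"
        proof (rule sum.neutral, rule ballI)
          fix b show "w u b * (q$u - q$b) = 0" using edge by (cases "w u b = 0") auto
        qed
        ultimately show ?thesis by simp
      qed
      obtain u where u: "w v u \<noteq> 0" using assms(2) unfolding no_isolated_vertices_def by blast
      hence "u \<noteq> v" using wg by auto
      hence "q$v = 1" "q$u = 0" using comp by (simp_all add: e_def axis_def)
      moreover have "q$v = q$u" using edge u by blast
      ultimately show False by simp
    qed
    have "x0 * (1 - x0) * A > 0" using x0 Apos by simp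
    thus False using m0 m1 sumeq by linarith
  qed
qed

end
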